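(* There is a function $f_1(k,q)$ satisfying the following. Let $k,q\ge 2$ be integers. Let $T$ be a tree whose edges are labeled by elements of $\mathbb{Z}_q$, and let $L$ be a set of leaves of $T$ with $|L|=f_1(k,q)$. Then there exist a subset $L_0\subset L$ with $|L_0|=k$ and a residue $a\in\mathbb{Z}_q$ such that for every three leaves $x_1,x_2,x_3\in L_0$ there is a vertex $v\in V(T)$ such that the paths in $T$ from $v$ to $x_1$, $x_2$, $x_3$ are pairwise disjoint except at $v$ and each has weight $a$ modulo $q$.
   Context: The weight of a path in an edge-labeled tree is the sum (in $\mathbb{Z}_q$) of the labels of its edges. *)

theory Defs
  imports Main
begin

definition simple_graph :: "nat set \<Rightarrow> (nat \<Rightarrow> nat \<Rightarrow> bool) \<Rightarrow> bool" where
  "simple_graph V E \<longleftrightarrow> finite V \<and> (\<forall>u w. E u w \<longrightarrow> u \<in> V \<and> w \<in> V)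
     \<and> (\<forall>u w. E u w \<longrightarrow> E w u) \<and> (\<forall>u. \<not> E u u)"

definition is_walk :: "nat set \<Rightarrow> (nat \<Rightarrow> nat \<Rightarrow> bool) \<Rightarrow> nat list \<Rightarrow> bool" where
  "is_walk V E p \<longleftrightarrow> p \<noteq> [] \<and> set p \<subseteq> V \<and> (\<forall>i. Suc i < length p \<longrightarrow> E (p ! i) (p ! Suc i))"

definition is_path :: "nat set \<Rightarrow> (nat \<Rightarrow> nat \<Rightarrow> bool) \<Rightarrow> nat list \<Rightarrow> bool" where
  "is_path V E p \<longleftrightarrow> is_walk V E p \<and> distinct p"

definition connected_graph :: "nat set \<Rightarrow> (nat \<Rightarrow> nat \<Rightarrow> bool) \<Rightarrow> bool" where
  "connected_graph V E \<longleftrightarrow> V \<noteq> {} \<and>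
     (\<forall>u\<in>V. \<forall>w\<in>V. \<exists>p. is_path V E p \<and> hd p = u \<and> last p = w)"

definition has_cycle :: "nat set \<Rightarrow> (nat \<Rightarrow> nat \<Rightarrow> bool) \<Rightarrow> bool" where
  "has_cycle V E \<longleftrightarrow> (\<exists>p. is_path V E p \<and> length p \<ge> 3 \<and> E (last p) (hd p))"

definition is_tree :: "nat set \<Rightarrow> (nat \<Rightarrow> nat \<Rightarrow> bool) \<Rightarrow> bool" where
  "is_tree V E \<longleftrightarrow> simple_graph V E \<and> connected_graph V E \<and> \<not> has_cycle V E"

definition is_leaf :: "nat set \<Rightarrow> (nat \<Rightarrow> nat \<Rightarrow> bool) \<Rightarrow> nat \<Rightarrow> bool" where
  "is_leaf V E v \<longleftrightarrow> v \<in> V \<and> card {u \<in> V. E v u} = 1"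

definition path_weight :: "(nat set \<Rightarrow> int) \<Rightarrow> nat list \<Rightarrow> int" where
  "path_weight lab p = (\<Sum>i<length p - 1. lab {p ! i, p ! Suc i})"

end

theory Submission
  imports Defs
begin


fun lcp :: "'a list \<Rightarrow> 'a list \<Rightarrow> 'a list" where
  "lcp (x#xs) (y#ys) = (if x = y then x # lcp xs ys else [])"
| "lcp _ _ = []"

lemma lcp_take1: "take (length (lcp xs ys)) xs = lcp xs ys"
  by (induction xs ys rule: lcp.induct) auto
lemma lcp_take2: "take (length (lcp xs ys)) ys = lcp xs ys"
  by (induction xs ys rule: lcp.induct) auto
lemma lcp_len1: "length (lcp xs ys) \<le> length xs"
  by (induction xs ys rule: lcp.induct) auto
lemma lcp_len2: "length (lcp xs ys) \<le> length ys"
  by (induction xs ys rule: lcp.induct) auto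
lemma lcp_comm: "lcp xs ys = lcp ys xs"
  by (induction xs ys rule: lcp.induct) auto
lemma lcp_max: "n \<le> length xs \<Longrightarrow> n \<le> length ys \<Longrightarrow> take n xs = take n ys \<Longrightarrow> n \<le> length (lcp xs ys)"
proof (induction xs ys arbitrary: n rule: lcp.induct)
  case (1 x xs y ys)
  then show ?case by (cases n) auto
qed auto
lemma lcp_neq: "length (lcp xs ys) < length xs \<Longrightarrow> length (lcp xs ys) < length ys \<Longrightarrow>
   xs ! length (lcp xs ys) \<noteq> ys ! length (lcp xs ys)"
  by (induction xs ys rule: lcp.induct) auto
lemma lcp_hd: "xs \<noteq> [] \<Longrightarrow> ys \<noteq> [] \<Longrightarrow> hd xs \<noteq> hd ys \<Longrightarrow> lcp xs ys = []"
  by (cases xs; cases ys) auto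

definition antichain :: "'a list set \<Rightarrow> bool" where
  "antichain S \<longleftrightarrow> (\<forall>x\<in>S. \<forall>y\<in>S. \<forall>z. y = x @ z \<longrightarrow> z = [])"

lemma pigeon:
  assumes "finite A" "\<forall>x\<in>A. f x < (q::nat)" "card A \<ge> q * n" "q > 0"
  shows "\<exists>b<q. card {x\<in>A. f x = b} \<ge> n"
proof (rule ccontr)
  assume H: "\<not> ?thesis"
  then have n: "n > 0" using assms(4) by auto
  have "A = (\<Union>b\<in>{..<q}. {x\<in>A. f x = b})" using assms(2) by auto
  then have "card A \<le> (\<Sum>b\<in>{..<q}. card {x\<in>A. f x = b})"
    by (metis card_UN_le finite_lessThan)
  also have "\<dots> \<le> (\<Sum>b\<in>{..<q}. n - 1)"
    by (rule sum_mono) (use H in force)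
  also have "\<dots> = q * (n - 1)" by simp
  finally show False using assms(3) n assms(4)
    by (metis diff_less less_one mult_less_cancel1 not_le order.strict_trans2)
qed

lemma comb:
  assumes k: "k \<ge> (2::nat)"
  shows "finite S \<Longrightarrow> antichain S \<Longrightarrow> card S \<ge> k^m \<Longrightarrow>
    (\<exists>S0\<subseteq>S. card S0 = k \<and> (\<exists>u. \<forall>x\<in>S0. \<forall>y\<in>S0. x \<noteq> y \<longrightarrow> lcp x y = u)) \<or>
    (\<exists>ys us. length ys = m \<and> distinct ys \<and> set ys \<subseteq> S \<and>
        (\<forall>i j. i < j \<longrightarrow> j < m \<longrightarrow> lcp (ys!i) (ys!j) = us i))"
proof (induction m arbitrary: S)
  case 0
  then show ?case by (intro disjI2 exI[of _ "[]"] exI[of _ "\<lambda>i. []"]) auto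
next
  case (Suc m)
  let ?C = "\<lambda>S. (\<exists>S0\<subseteq>S. card S0 = k \<and> (\<exists>u. \<forall>x\<in>S0. \<forall>y\<in>S0. x \<noteq> y \<longrightarrow> lcp x y = u)) \<or>
    (\<exists>ys us. length ys = Suc m \<and> distinct ys \<and> set ys \<subseteq> S \<and>
        (\<forall>i j. i < j \<longrightarrow> j < Suc m \<longrightarrow> lcp (ys!i) (ys!j) = us i))"
  have main: "\<And>S :: 'a list set. sum length S = n \<Longrightarrow> finite S \<Longrightarrow> antichain S \<Longrightarrow> card S \<ge> k^Suc m \<Longrightarrow> ?C S" for n
  proof (induction n rule: less_induct)
    case (less n S)
    have "k^m \<ge> 1" using k by simp
    then have "k * k^m \<ge> 2 * 1" using k by (intro mult_mono) auto
    then have "k^Suc m \<ge> 2" by simp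
    then have c2: "card S \<ge> 2" using less.prems(4) by linarith
    have nn: "[] \<notin> S"
    proof
      assume "[] \<in> S"
      have "\<not> S \<subseteq> {[]}"
      proof
        assume "S \<subseteq> {[]}"
        then have "card S \<le> card {[]::'a list}" using card_mono[of "{[]}" S] by simp
        then show False using c2 by simp
      qed
      then obtain y where "y \<in> S" "y \<noteq> []" by blast
      moreover have "\<forall>z. y = [] @ z \<longrightarrow> z = []" using less.prems(3) \<open>[] \<in> S\<close> \<open>y \<in> S\<close>
        unfolding antichain_def by blast
      ultimately show False by simp
    qed
    let ?H = "hd ` S"
    have finH: "finite ?H" using less.prems(2) by simp
    have Hne: "?H \<noteq> {}" using c2 by auto
    consider (one) "card ?H = 1" | (big) "card ?H \<ge> k" | (mid) "card ?H \<ge> 2" "card ?H < k"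
    proof -
      have pos: "card ?H > 0" using finH Hne by (simp add: card_gt_0_iff)
      show ?thesis using that pos by (cases "card ?H = 1"; cases "k \<le> card ?H") auto
    qed
    then show ?case
    proof cases
      case one
      then obtain a where Ha: "?H = {a}" using card_1_singletonE by blast
      have xa: "x = a # tl x" if "x \<in> S" for x
      proof -
        have "hd x \<in> ?H" using that by simp
        then have "hd x = a" using Ha by simp
        moreover have "x \<noteq> []" using that nn by auto
        ultimately show ?thesis by (metis hd_Cons_tl)
      qed
      let ?S' = "tl ` S"
      have inj: "inj_on tl S"
      proof (rule inj_onI)
        fix x y assume "x \<in> S" "y \<in> S" "tl x = tl y"
        have "x = a # tl x" by (rule xa) fact
        moreover have "y = a # tl y" by (rule xa) fact
        ultimately
        show "x = y" using \<open>tl x = tl y\<close> by metis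
      qed
      have cS': "card ?S' = card S" using card_image[OF inj] .
      have finS': "finite ?S'" using less.prems(2) by simp
      have anti: "antichain ?S'"
        unfolding antichain_def
      proof (intro ballI allI impI)
        fix x y z assume "x \<in> ?S'" "y \<in> ?S'" "y = x @ z"
        then obtain x0 y0 where "x0 \<in> S" "y0 \<in> S" "x = tl x0" "y = tl y0" by auto
        then have "y0 = x0 @ z" using xa \<open>y = x @ z\<close> by (metis append_Cons)
        then show "z = []" using less.prems(3) \<open>x0 \<in> S\<close> \<open>y0 \<in> S\<close> unfolding antichain_def by blast
      qed
      have "sum length ?S' = sum (\<lambda>x. length (tl x)) S"
        using sum.reindex[OF inj, of length] by simp
      also have "\<dots> < sum length S"
      proof (rule sum_strict_mono_ex1[OF less.prems(2)])
        show "\<forall>x\<in>S. length (tl x) \<le> length x" by simp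
        obtain x where "x \<in> S" using c2 by fastforce
        moreover have "length (tl x) < length x" using nn \<open>x \<in> S\<close> by (cases x) auto
        ultimately show "\<exists>a\<in>S. length (tl a) < length a" by blast
      qed
      finally have lt: "sum length ?S' < n" using less.prems(1) by simp
      have IH: "?C ?S'" using less.IH[OF lt refl finS' anti] cS' less.prems(4) by simp
      then show ?thesis
      proof
        assume "\<exists>S0\<subseteq>?S'. card S0 = k \<and> (\<exists>u. \<forall>x\<in>S0. \<forall>y\<in>S0. x \<noteq> y \<longrightarrow> lcp x y = u)"
        then obtain S0 u where S0: "S0 \<subseteq> ?S'" "card S0 = k" "\<forall>x\<in>S0. \<forall>y\<in>S0. x \<noteq> y \<longrightarrow> lcp x y = u"
          by blast
        have "(Cons a) ` S0 \<subseteq> S" using S0(1) xa by auto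
        moreover have "card ((Cons a) ` S0) = k" using S0(2) by (simp add: card_image)
        moreover have "\<forall>x\<in>(Cons a) ` S0. \<forall>y\<in>(Cons a) ` S0. x \<noteq> y \<longrightarrow> lcp x y = a # u"
          using S0(3) by auto
        ultimately show ?thesis by blast
      next
        assume "\<exists>ys us. length ys = Suc m \<and> distinct ys \<and> set ys \<subseteq> ?S' \<and>
          (\<forall>i j. i < j \<longrightarrow> j < Suc m \<longrightarrow> lcp (ys!i) (ys!j) = us i)"
        then obtain ys us where Y: "length ys = Suc m" "distinct ys" "set ys \<subseteq> ?S'"
          "\<forall>i j. i < j \<longrightarrow> j < Suc m \<longrightarrow> lcp (ys!i) (ys!j) = us i" by blast
        have "set (map (Cons a) ys) \<subseteq> S" using Y(3) xa by auto
        moreover have "distinct (map (Cons a) ys)" using Y(2) by (simp add: distinct_map)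
        moreover have "\<forall>i j. i < j \<longrightarrow> j < Suc m \<longrightarrow> lcp (map (Cons a) ys!i) (map (Cons a) ys!j) = a # us i"
          using Y(1,4) by auto
        ultimately show ?thesis using Y(1) by (intro disjI2 exI[of _ "map (Cons a) ys"] exI[of _ "\<lambda>i. a # us i"]) auto
      qed
    next
      case big
      obtain H0 where H0: "H0 \<subseteq> ?H" "card H0 = k" "finite H0" using obtain_subset_with_card_n[OF big] by blast
      define rep where "rep h = (SOME x. x \<in> S \<and> hd x = h)" for h
      have rep: "rep h \<in> S \<and> hd (rep h) = h" if "h \<in> ?H" for h
        unfolding rep_def by (rule someI_ex) (use that in auto)
      have inj: "inj_on rep H0"
      proof (rule inj_onI)
        fix h1 h2 assume "h1 \<in> H0" "h2 \<in> H0" "rep h1 = rep h2"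
        have "h1 \<in> ?H" "h2 \<in> ?H" using H0(1) \<open>h1 \<in> H0\<close> \<open>h2 \<in> H0\<close> by (auto simp del: image_iff)
        then have "hd (rep h1) = h1" "hd (rep h2) = h2" using rep[of h1] rep[of h2] by simp_all
        then show "h1 = h2" using \<open>rep h1 = rep h2\<close> by metis
      qed
      have "rep ` H0 \<subseteq> S" using rep H0(1) by (auto simp del: image_iff)
      moreover have "card (rep ` H0) = k" using card_image[OF inj] H0(2) by simp
      moreover have "\<forall>x\<in>rep ` H0. \<forall>y\<in>rep ` H0. x \<noteq> y \<longrightarrow> lcp x y = []"
      proof (intro ballI impI)
        fix x y assume "x \<in> rep ` H0" "y \<in> rep ` H0" "x \<noteq> y"
        then obtain h1 h2 where "h1 \<in> H0" "h2 \<in> H0" "x = rep h1" "y = rep h2" by auto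
        then have "h1 \<in> ?H" "h2 \<in> ?H" using H0(1) by (auto simp del: image_iff)
        then have r: "rep h1 \<in> S" "hd (rep h1) = h1" "rep h2 \<in> S" "hd (rep h2) = h2" using rep[of h1] rep[of h2] by simp_all
        have "h1 \<noteq> h2" using \<open>x \<noteq> y\<close> \<open>x = rep h1\<close> \<open>y = rep h2\<close> by auto
        then show "lcp x y = []" using r nn \<open>x = rep h1\<close> \<open>y = rep h2\<close>
          by (intro lcp_hd) auto
      qed
      ultimately show ?thesis by blast
    next
      case mid
      define G where "G h = {x\<in>S. hd x = h}" for h
      have "\<exists>h\<in>?H. card (G h) \<ge> k^m"
      proof (rule ccontr)
        assume "\<not> ?thesis"
        then have lt: "\<forall>h\<in>?H. card (G h) \<le> k^m - 1" by force
        have "S = (\<Union>h\<in>?H. G h)" unfolding G_def by auto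
        then have "card S \<le> (\<Sum>h\<in>?H. card (G h))" by (metis card_UN_le finH)
        also have "\<dots> \<le> (\<Sum>h\<in>?H. k^m - 1)" by (rule sum_mono) (use lt in auto)
        also have "\<dots> = card ?H * (k^m - 1)" by simp
        also have "\<dots> \<le> (k - 1) * (k^m - 1)" using mid(2) by (intro mult_right_mono) auto
        also have "\<dots> < k * k^m"
        proof -
          have "(k - 1) * (k^m - 1) \<le> (k-1) * k^m" by simp
          also have "\<dots> < k * k^m" using k by simp
          finally show ?thesis .
        qed
        finally show False using less.prems(4) by simp
      qed
      then obtain h where h: "h \<in> ?H" "card (G h) \<ge> k^m" by blast
      have finG: "finite (G h)" using less.prems(2) unfolding G_def by simp
      have GS: "G h \<subseteq> S" unfolding G_def by auto
      have antiG: "antichain (G h)" using less.prems(3) GS unfolding antichain_def by blast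
      obtain h' where h': "h' \<in> ?H" "h' \<noteq> h"
      proof -
        have "?H \<noteq> {h}" using mid(1) by auto
        then show ?thesis using h(1) that by blast
      qed
      obtain y0 where y0: "y0 \<in> S" "hd y0 = h'" using h' by auto
      from Suc.IH[OF finG antiG h(2)] show ?thesis
      proof
        assume "\<exists>S0\<subseteq>G h. card S0 = k \<and> (\<exists>u. \<forall>x\<in>S0. \<forall>y\<in>S0. x \<noteq> y \<longrightarrow> lcp x y = u)"
        then obtain S0 u where "S0 \<subseteq> G h" "card S0 = k" "\<forall>x\<in>S0. \<forall>y\<in>S0. x \<noteq> y \<longrightarrow> lcp x y = u" by blast
        then have "S0 \<subseteq> S" "card S0 = k" "\<forall>x\<in>S0. \<forall>y\<in>S0. x \<noteq> y \<longrightarrow> lcp x y = u" using GS by auto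
        then show ?thesis by blast
      next
        assume "\<exists>ys us. length ys = m \<and> distinct ys \<and> set ys \<subseteq> G h \<and>
          (\<forall>i j. i < j \<longrightarrow> j < m \<longrightarrow> lcp (ys!i) (ys!j) = us i)"
        then obtain ys us where Y: "length ys = m" "distinct ys" "set ys \<subseteq> G h"
          "\<forall>i j. i < j \<longrightarrow> j < m \<longrightarrow> lcp (ys!i) (ys!j) = us i" by blast
        have y0G: "y0 \<notin> G h" using y0 h' unfolding G_def by auto
        have L: "lcp ((y0 # ys)!i) ((y0 # ys)!j) = (if i = 0 then [] else us (i - 1))"
          if "i < j" "j < Suc m" for i j
        proof (cases i)
          case 0
          have "j - 1 < length ys" using Y(1) that by simp
          then have "ys ! (j - 1) \<in> G h" using Y(3) nth_mem by blast
          then have "hd (ys ! (j-1)) = h" "ys ! (j-1) \<in> S" unfolding G_def by auto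
          moreover have "(y0 # ys) ! j = ys ! (j - 1)" using that 0 by (simp add: nth_Cons')
          moreover have "lcp y0 (ys ! (j-1)) = []"
            by (rule lcp_hd) (use y0 h' nn calculation in auto)
          ultimately show ?thesis using 0 by simp
        next
          case (Suc i')
          then show ?thesis using that Y(4) by (cases j) auto
        qed
        have 1: "length (y0#ys) = Suc m" using Y(1) by simp
        have 2: "distinct (y0#ys)" using Y(2,3) y0G by auto
        have 3: "set (y0#ys) \<subseteq> S" using Y(3) GS y0(1) by auto
        have 4: "\<forall>i j. i<j \<longrightarrow> j<Suc m \<longrightarrow> lcp ((y0#ys)!i) ((y0#ys)!j) = (\<lambda>i. if i=0 then [] else us (i-1)) i"
          using L by blast
        show ?thesis
          by (intro disjI2 exI[of _ "y0#ys"] exI[of _ "\<lambda>i. if i=0 then [] else us (i-1)"] conjI 1 2 3 4)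
      qed
    qed
  qed
  show ?case using main[OF refl Suc.prems] .
qed



lemma ramsey_lcp:
  assumes k: "k \<ge> 2" and q: "q > 0" and fin: "finite S" and anti: "antichain S"
    and col: "\<forall>l. col l < (q::nat)" and card: "card S \<ge> k^(q*(k-1)+1)"
  shows "\<exists>S0\<subseteq>S. card S0 = k \<and> (\<exists>b. \<forall>x\<in>S0. \<forall>y\<in>S0. x \<noteq> y \<longrightarrow> col (lcp x y) = b)"
proof -
  let ?N = "q*(k-1)"
  from comb[OF k fin anti card] show ?thesis
  proof
    assume "\<exists>S0\<subseteq>S. card S0 = k \<and> (\<exists>u. \<forall>x\<in>S0. \<forall>y\<in>S0. x \<noteq> y \<longrightarrow> lcp x y = u)"
    then obtain S0 u where S0: "S0 \<subseteq> S" "card S0 = k" "\<forall>x\<in>S0. \<forall>y\<in>S0. x \<noteq> y \<longrightarrow> lcp x y = u"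
      by blast
    then have "\<forall>x\<in>S0. \<forall>y\<in>S0. x \<noteq> y \<longrightarrow> col (lcp x y) = col u" by simp
    then show ?thesis using S0(1,2) by blast
  next
    assume "\<exists>ys us. length ys = ?N+1 \<and> distinct ys \<and> set ys \<subseteq> S \<and>
        (\<forall>i j. i < j \<longrightarrow> j < ?N+1 \<longrightarrow> lcp (ys!i) (ys!j) = us i)"
    then obtain ys us where Y: "length ys = ?N+1" "distinct ys" "set ys \<subseteq> S"
        "\<forall>i j. i < j \<longrightarrow> j < ?N+1 \<longrightarrow> lcp (ys!i) (ys!j) = us i" by blast
    have "\<exists>b<q. card {i\<in>{..<?N}. col (us i) = b} \<ge> k - 1"
      by (rule pigeon) (use col q in auto)
    then obtain b where b: "card {i\<in>{..<?N}. col (us i) = b} \<ge> k - 1" by blast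
    obtain I where I: "I \<subseteq> {i\<in>{..<?N}. col (us i) = b}" "card I = k - 1" "finite I"
      using obtain_subset_with_card_n[OF b] by blast
    let ?J = "insert ?N I"
    have NI: "?N \<notin> I" using I(1) by auto
    have cJ: "card ?J = k" using I(2,3) NI k by simp
    have Jl: "\<forall>i\<in>?J. i < length ys" using I(1) Y(1) by auto
    have inj: "inj_on (nth ys) ?J" using inj_on_nth[OF Y(2) Jl] .
    have sub: "nth ys ` ?J \<subseteq> S" using Jl Y(3) nth_mem by blast
    have ck: "card (nth ys ` ?J) = k" using card_image[OF inj] cJ by simp
    have pr: "col (lcp x y) = b" if hx: "x \<in> nth ys ` ?J" and hy: "y \<in> nth ys ` ?J" and hxy: "x \<noteq> y" for x y
    proof -
      obtain i where i': "x = ys ! i" "i \<in> ?J" using hx by (rule imageE)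
      note i = i'(2,1)
      obtain j where j': "y = ys ! j" "j \<in> ?J" using hy by (rule imageE)
      note j = j'(2,1)
      note ij = i(1) j(1) i(2) j(2)
      have "i \<noteq> j" using ij(3,4) hxy by metis
      have le: "i \<le> ?N" "j \<le> ?N" using ij(1,2) I(1) by auto
      show ?thesis
      proof (cases "i < j")
        case True
        then have "i \<in> I" using ij(1) le by auto
        then have "col (us i) = b" using I(1) by auto
        moreover have "lcp x y = us i" using Y(4)[rule_format, of i j] True le unfolding ij(3,4) by linarith
        ultimately show ?thesis by simp
      next
        case False
        then have "j < i" using \<open>i \<noteq> j\<close> by simp
        then have "j \<in> I" using ij(2) le by auto
        then have "col (us j) = b" using I(1) by auto
        moreover have "lcp y x = us j" using Y(4)[rule_format, of j i] \<open>j < i\<close> le unfolding ij(3,4) by linarith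
        ultimately show ?thesis by (simp add: lcp_comm)
      qed
    qed
    show ?thesis
      by (intro exI[of _ "nth ys ` ?J"] conjI sub ck exI[of _ b] ballI impI pr)
  qed
qed

lemma walk_single[simp]: "is_walk V E [a] \<longleftrightarrow> a \<in> V"
  by (simp add: is_walk_def)

lemma walk_cons2: "is_walk V E (a # b # xs) \<longleftrightarrow> a \<in> V \<and> E a b \<and> is_walk V E (b # xs)"
proof
  assume H: "is_walk V E (a # b # xs)"
  have "Suc 0 < length (a#b#xs)" by simp
  then have "E ((a#b#xs)!0) ((a#b#xs)!Suc 0)" using H unfolding is_walk_def by blast
  then have Eab: "E a b" by simp
  have H': "\<forall>i. Suc i < length (a#b#xs) \<longrightarrow> E ((a#b#xs)!i) ((a#b#xs)!Suc i)" using H unfolding is_walk_def by blast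
  have Wb: "is_walk V E (b # xs)" unfolding is_walk_def
  proof (intro conjI allI impI)
    fix i assume "Suc i < length (b # xs)"
    note H'
    moreover have "Suc (Suc i) < length (a#b#xs)" using \<open>Suc i < length (b # xs)\<close> by simp
    ultimately have "E ((a#b#xs)!Suc i) ((a#b#xs)!Suc (Suc i))" by blast
    then show "E ((b # xs) ! i) ((b # xs) ! Suc i)" by simp
  qed (use H in \<open>auto simp: is_walk_def\<close>)
  have "a \<in> V" using H unfolding is_walk_def by simp
  then show "a \<in> V \<and> E a b \<and> is_walk V E (b # xs)" using Eab Wb by simp
next
  assume H: "a \<in> V \<and> E a b \<and> is_walk V E (b # xs)"
  show "is_walk V E (a # b # xs)" unfolding is_walk_def
  proof (intro conjI allI impI)
    fix i assume i: "Suc i < length (a # b # xs)"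
    show "E ((a # b # xs) ! i) ((a # b # xs) ! Suc i)"
    proof (cases i)
      case 0 then show ?thesis using H by simp
    next
      case (Suc i')
      then show ?thesis using H i unfolding is_walk_def by simp
    qed
  qed (use H in \<open>auto simp: is_walk_def\<close>)
qed

lemma walk_nonempty: "is_walk V E p \<Longrightarrow> p \<noteq> []" by (simp add: is_walk_def)

lemma walk_append: "is_walk V E xs \<Longrightarrow> is_walk V E ys \<Longrightarrow> E (last xs) (hd ys) \<Longrightarrow> is_walk V E (xs @ ys)"
proof (induction xs)
  case Nil then show ?case by (simp add: is_walk_def)
next
  case (Cons a xs)
  show ?case
  proof (cases xs)
    case Nil
    then obtain b ys' where "ys = b # ys'" using Cons.prems(2) walk_nonempty by (cases ys) auto
    then show ?thesis using Cons.prems Nil by (simp add: walk_cons2)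
  next
    case (Cons b xs')
    then show ?thesis using Cons.prems Cons.IH by (simp add: walk_cons2)
  qed
qed

lemma walk_rev: "(\<forall>u w. E u w \<longrightarrow> E w u) \<Longrightarrow> is_walk V E xs \<Longrightarrow> is_walk V E (rev xs)"
proof (induction xs)
  case Nil then show ?case by (simp add: is_walk_def)
next
  case (Cons a xs)
  show ?case
  proof (cases xs)
    case Nil
    then show ?thesis using Cons.prems by simp
  next
    case (Cons b xs')
    have "is_walk V E (rev xs)" using Cons.IH Cons.prems \<open>xs = b # xs'\<close> by (simp add: walk_cons2)
    moreover have "E (last (rev xs)) (hd [a])" using Cons.prems \<open>xs = b # xs'\<close> by (simp add: walk_cons2)
    moreover have "is_walk V E [a]" using Cons.prems \<open>xs = b # xs'\<close> by (simp add: walk_cons2)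
    ultimately show ?thesis using walk_append by fastforce
  qed
qed

lemma walk_drop: "is_walk V E xs \<Longrightarrow> n < length xs \<Longrightarrow> is_walk V E (drop n xs)"
  unfolding is_walk_def using set_drop_subset[of n xs] by auto

lemma walk_take: "is_walk V E xs \<Longrightarrow> 0 < n \<Longrightarrow> is_walk V E (take n xs)"
  unfolding is_walk_def using set_take_subset[of n xs] by auto

lemma path_append: "is_path V E xs \<Longrightarrow> is_path V E ys \<Longrightarrow> E (last xs) (hd ys) \<Longrightarrow> set xs \<inter> set ys = {}
  \<Longrightarrow> is_path V E (xs @ ys)"
  unfolding is_path_def using walk_append by auto

lemma path_rev: "(\<forall>u w. E u w \<longrightarrow> E w u) \<Longrightarrow> is_path V E xs \<Longrightarrow> is_path V E (rev xs)"
  unfolding is_path_def using walk_rev by auto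

lemma path_drop: "is_path V E xs \<Longrightarrow> n < length xs \<Longrightarrow> is_path V E (drop n xs)"
  unfolding is_path_def using walk_drop by auto

lemma path_take: "is_path V E xs \<Longrightarrow> 0 < n \<Longrightarrow> is_path V E (take n xs)"
  unfolding is_path_def using walk_take by auto

lemma W_Nil[simp]: "path_weight lab [] = 0" by (simp add: path_weight_def)
lemma W_single[simp]: "path_weight lab [a] = 0" by (simp add: path_weight_def)
lemma W_cons2: "path_weight lab (a # b # xs) = lab {a, b} + path_weight lab (b # xs)"
  unfolding path_weight_def by (simp add: sum.lessThan_Suc_shift del: sum.lessThan_Suc)

lemma W_append: "xs \<noteq> [] \<Longrightarrow> ys \<noteq> [] \<Longrightarrow>
   path_weight lab (xs @ ys) = path_weight lab xs + lab {last xs, hd ys} + path_weight lab ys"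
proof (induction xs)
  case Nil then show ?case by simp
next
  case (Cons a xs)
  show ?case
  proof (cases xs)
    case Nil
    then obtain b ys' where "ys = b # ys'" using Cons.prems(2) by (cases ys) auto
    then show ?thesis using Nil by (simp add: W_cons2)
  next
    case (Cons b xs')
    then show ?thesis using Cons.prems Cons.IH by (simp add: W_cons2)
  qed
qed

lemma W_rev: "path_weight lab (rev xs) = path_weight lab xs"
proof (induction xs)
  case Nil then show ?case by simp
next
  case (Cons a xs)
  show ?case
  proof (cases xs)
    case Nil then show ?thesis by simp
  next
    case (Cons b xs')
    have "path_weight lab (rev (a # xs)) = path_weight lab (rev xs @ [a])" by simp
    also have "\<dots> = path_weight lab (rev xs) + lab {last (rev xs), a}"
      using W_append[of "rev xs" "[a]" lab] Cons by simp
    also have "\<dots> = path_weight lab xs + lab {a, b}" using Cons.IH Cons by (simp add: insert_commute)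
    also have "\<dots> = path_weight lab (a # xs)" using Cons by (simp add: W_cons2)
    finally show ?thesis .
  qed
qed

lemma drop_pred: "0 < n \<Longrightarrow> n \<le> length A \<Longrightarrow> drop (n - 1) A = A ! (n - 1) # drop n A"
  using Cons_nth_drop_Suc[of "n - 1" A] by simp

lemma W_split: "0 < n \<Longrightarrow> n \<le> length A \<Longrightarrow>
  path_weight lab A = path_weight lab (take n A) + path_weight lab (drop (n - 1) A)"
proof (cases "n = length A")
  case True
  assume "0 < n"
  then have "drop (n - 1) A = [A ! (n - 1)]" using True drop_pred[of n A] by simp
  then show ?thesis using True by simp
next
  case False
  assume n: "0 < n" "n \<le> length A"
  then have lt: "n < length A" using False by simp
  have A: "A = take n A @ drop n A" by simp
  have d: "drop (n - 1) A = [A ! (n - 1)] @ drop n A" using n drop_pred[of n A] by simp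
  have ne1: "take n A \<noteq> []" using n by auto
  have ne2: "drop n A \<noteq> []" using lt by auto
  have lt1: "last (take n A) = A ! (n - 1)" using n ne1 by (simp add: last_conv_nth min_def)
  have "path_weight lab A = path_weight lab (take n A) + lab {A ! (n-1), hd (drop n A)} + path_weight lab (drop n A)"
    using W_append[OF ne1 ne2, of lab] lt1 by simp
  moreover have "path_weight lab (drop (n - 1) A) = lab {A ! (n-1), hd (drop n A)} + path_weight lab (drop n A)"
    using d W_append[of "[A ! (n - 1)]" "drop n A" lab] ne2 by simp
  ultimately show ?thesis by simp
qed

lemma in_drop: "z \<in> set (drop n xs) \<Longrightarrow> \<exists>k. n \<le> k \<and> k < length xs \<and> xs ! k = z"
proof -
  assume "z \<in> set (drop n xs)"
  then obtain i where "i < length (drop n xs)" "drop n xs ! i = z" by (auto simp: in_set_conv_nth)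
  then show ?thesis by (intro exI[of _ "n + i"]) auto
qed

lemma in_drop2: "n \<le> k \<Longrightarrow> k < length xs \<Longrightarrow> xs ! k \<in> set (drop n xs)"
proof -
  assume "n \<le> k" "k < length xs"
  then have "drop n xs ! (k - n) = xs ! k" "k - n < length (drop n xs)" by auto
  then show ?thesis by (metis nth_mem)
qed



lemma walk_edge: "is_walk V E p \<Longrightarrow> Suc i < length p \<Longrightarrow> E (p!i) (p!Suc i)"
  unfolding is_walk_def by blast

lemma last_take': "0 < n \<Longrightarrow> n \<le> length w \<Longrightarrow> last (take n w) = w ! (n - 1)"
proof -
  assume n: "0 < n" "n \<le> length w"
  then have "take n w \<noteq> []" by auto
  then have "last (take n w) = take n w ! (length (take n w) - 1)" by (rule last_conv_nth)
  then show ?thesis using n by (simp add: min_def)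
qed

locale rg =
  fixes V :: "nat set" and E :: "nat \<Rightarrow> nat \<Rightarrow> bool" and r :: nat
  assumes sg: "simple_graph V E" and conn: "connected_graph V E" and rV: "r \<in> V"
begin

lemma symE: "\<forall>u w. E u w \<longrightarrow> E w u" using sg unfolding simple_graph_def by blast
lemma EV: "E u w \<Longrightarrow> u \<in> V \<and> w \<in> V" using sg unfolding simple_graph_def by blast
lemma finV: "finite V" using sg unfolding simple_graph_def by blast

definition dist :: "nat \<Rightarrow> nat" where
  "dist x = (LEAST n. \<exists>w. is_walk V E w \<and> hd w = r \<and> last w = x \<and> length w = Suc n)"

lemma walk_ex: "x \<in> V \<Longrightarrow> \<exists>w. is_walk V E w \<and> hd w = r \<and> last w = x \<and> length w = Suc (dist x)"
proof -
  assume x: "x \<in> V"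
  obtain p where p: "is_path V E p" "hd p = r" "last p = x"
    using conn x rV unfolding connected_graph_def by blast
  then have "p \<noteq> []" unfolding is_path_def is_walk_def by simp
  then have "length p = Suc (length p - 1)" by simp
  then have "\<exists>n w. is_walk V E w \<and> hd w = r \<and> last w = x \<and> length w = Suc n"
    using p unfolding is_path_def by blast
  then show ?thesis unfolding dist_def by (rule LeastI_ex)
qed

lemma dist_le: "is_walk V E w \<Longrightarrow> hd w = r \<Longrightarrow> last w = x \<Longrightarrow> dist x \<le> length w - 1"
proof -
  assume w: "is_walk V E w" "hd w = r" "last w = x"
  then have "w \<noteq> []" by (simp add: is_walk_def)
  then have "length w = Suc (length w - 1)" by simp
  then have "\<exists>w'. is_walk V E w' \<and> hd w' = r \<and> last w' = x \<and> length w' = Suc (length w - 1)"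
    using w by blast
  then show ?thesis unfolding dist_def by (rule Least_le)
qed

lemma dist0: "x \<in> V \<Longrightarrow> dist x = 0 \<Longrightarrow> x = r"
proof -
  assume "x \<in> V" "dist x = 0"
  then obtain w where w: "is_walk V E w" "hd w = r" "last w = x" "length w = 1"
    using walk_ex by fastforce
  then obtain a where "w = [a]" by (cases w) auto
  then show ?thesis using w by simp
qed

lemma dist_r: "dist r = 0"
  using dist_le[of "[r]" r] rV by simp

lemma par_ex: "x \<in> V \<Longrightarrow> dist x > 0 \<Longrightarrow> \<exists>y. E y x \<and> Suc (dist y) = dist x"
proof -
  assume x: "x \<in> V" "dist x > 0"
  obtain w where w: "is_walk V E w" "hd w = r" "last w = x" "length w = Suc (dist x)"
    using walk_ex x by blast
  define y where "y = w ! (dist x - 1)"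
  have H: "\<forall>i. Suc i < length w \<longrightarrow> E (w!i) (w!Suc i)" using w(1) unfolding is_walk_def by blast
  have "Suc (dist x - 1) < length w" using w(4) x(2) by simp
  then have "E (w ! (dist x - 1)) (w ! Suc (dist x - 1))" using H by blast
  moreover have "w ! Suc (dist x - 1) = x"
  proof -
    have "w \<noteq> []" using w(4) by auto
    then have "last w = w ! (length w - 1)" by (rule last_conv_nth)
    then show ?thesis using w(3,4) x(2) by simp
  qed
  ultimately have Eyx: "E y x" unfolding y_def by simp
  have w': "is_walk V E (take (dist x) w)" using walk_take w(1) x(2) by blast
  have "hd (take (dist x) w) = r" using w(2) x(2) by simp
  moreover have "last (take (dist x) w) = y" unfolding y_def using x(2) w(4)
    by (simp add: last_take')
  ultimately have "dist y \<le> length (take (dist x) w) - 1" using dist_le w' by blast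
  then have le1: "Suc (dist y) \<le> dist x" using w(4) x(2) by simp
  have yV: "y \<in> V" using EV Eyx by blast
  obtain w2 where w2: "is_walk V E w2" "hd w2 = r" "last w2 = y" "length w2 = Suc (dist y)"
    using walk_ex yV by blast
  have "is_walk V E (w2 @ [x])" using walk_append[OF w2(1), of "[x]"] w2(3) Eyx x(1) by simp
  moreover have "hd (w2 @ [x]) = r" using w2(2,4) by (cases w2) auto
  moreover have "last (w2 @ [x]) = x" by simp
  ultimately have "dist x \<le> length (w2 @ [x]) - 1" using dist_le by blast
  then have "dist x \<le> Suc (dist y)" using w2(4) by simp
  then show ?thesis using le1 Eyx by (intro exI[of _ y]) simp
qed

definition par :: "nat \<Rightarrow> nat" where
  "par x = (SOME y. E y x \<and> Suc (dist y) = dist x)"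

lemma par: "x \<in> V \<Longrightarrow> dist x > 0 \<Longrightarrow> E (par x) x \<and> Suc (dist (par x)) = dist x \<and> par x \<in> V"
proof -
  assume "x \<in> V" "dist x > 0"
  then have "E (par x) x \<and> Suc (dist (par x)) = dist x"
    unfolding par_def by (rule someI_ex[OF par_ex])
  then show ?thesis using EV by blast
qed

lemma iter: "x \<in> V \<Longrightarrow> j \<le> dist x \<Longrightarrow> (par^^j) x \<in> V \<and> dist ((par^^j) x) = dist x - j"
proof (induction j)
  case 0 then show ?case by simp
next
  case (Suc j)
  then have IH: "(par^^j) x \<in> V" "dist ((par^^j) x) = dist x - j" by auto
  then have "dist ((par^^j) x) > 0" using Suc.prems by simp
  then have "Suc (dist (par ((par^^j) x))) = dist x - j" "par ((par^^j) x) \<in> V" using par[OF IH(1)] IH(2) by auto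
  then show ?case by simp
qed

definition P :: "nat \<Rightarrow> nat list" where
  "P x = map (\<lambda>i. (par^^(dist x - i)) x) [0..<Suc (dist x)]"

lemma P_len[simp]: "length (P x) = Suc (dist x)"
  by (simp add: P_def)

lemma P_ne: "P x \<noteq> []"
  using P_len[of x] by (cases "P x") auto

lemma P_nth: "i \<le> dist x \<Longrightarrow> P x ! i = (par^^(dist x - i)) x"
  unfolding P_def by (simp add: less_Suc_eq_le del: upt_Suc)

lemma P_nth_dist: "x \<in> V \<Longrightarrow> i \<le> dist x \<Longrightarrow> dist (P x ! i) = i \<and> P x ! i \<in> V"
  using iter[of x "dist x - i"] P_nth[of i x] by simp

lemma P_hd: "x \<in> V \<Longrightarrow> hd (P x) = r"
proof -
  assume x: "x \<in> V"
  have "hd (P x) = P x ! 0" using P_ne by (rule hd_conv_nth)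
  moreover have "dist (P x ! 0) = 0 \<and> P x ! 0 \<in> V" using P_nth_dist[OF x, of 0] by simp
  ultimately show ?thesis using dist0 by simp
qed

lemma P_last: "last (P x) = x"
proof -
  have "last (P x) = P x ! (length (P x) - 1)" using P_ne by (rule last_conv_nth)
  then have "last (P x) = P x ! dist x" by simp
  also have "\<dots> = x" using P_nth[of "dist x" x] by simp
  finally show ?thesis .
qed

lemma P_path: "x \<in> V \<Longrightarrow> is_path V E (P x)"
proof -
  assume x: "x \<in> V"
  have "set (P x) \<subseteq> V"
  proof
    fix z assume "z \<in> set (P x)"
    then obtain i where "i < length (P x)" "P x ! i = z" by (auto simp: in_set_conv_nth)
    then show "z \<in> V" using P_nth_dist[OF x, of i] by simp
  qed
  moreover have "\<forall>i. Suc i < length (P x) \<longrightarrow> E (P x ! i) (P x ! Suc i)"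
  proof (intro allI impI)
    fix i assume i: "Suc i < length (P x)"
    let ?z = "P x ! Suc i"
    have z: "dist ?z = Suc i" "?z \<in> V" using P_nth_dist[OF x, of "Suc i"] i by auto
    have "P x ! i = (par^^(dist x - i)) x" using P_nth[of i x] i by simp
    also have "\<dots> = (par^^(Suc (dist x - Suc i))) x" using i by (simp add: Suc_diff_Suc)
    also have "\<dots> = par ?z" using P_nth[of "Suc i" x] i by simp
    finally have "P x ! i = par ?z" .
    then show "E (P x ! i) ?z" using par[OF z(2)] z(1) by simp
  qed
  moreover have "distinct (P x)"
  proof (subst distinct_conv_nth, intro allI impI)
    fix i j assume "i < length (P x)" "j < length (P x)" "i \<noteq> j"
    then show "P x ! i \<noteq> P x ! j" using P_nth_dist[OF x, of i] P_nth_dist[OF x, of j] by auto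
  qed
  ultimately show ?thesis unfolding is_path_def is_walk_def using P_ne by blast
qed

lemma P_prefix: "x \<in> V \<Longrightarrow> i \<le> dist x \<Longrightarrow> P (P x ! i) = take (Suc i) (P x)"
proof -
  assume x: "x \<in> V" and i: "i \<le> dist x"
  let ?u = "P x ! i"
  have du: "dist ?u = i" using P_nth_dist[OF x i] by simp
  show ?thesis
  proof (rule nth_equalityI)
    show "length (P ?u) = length (take (Suc i) (P x))" using du i by simp
  next
    fix l assume "l < length (P ?u)"
    then have l: "l \<le> i" using du by simp
    have "P ?u ! l = (par^^(i - l)) ?u" using P_nth[of l ?u] du l by simp
    also have "\<dots> = (par^^(i - l)) ((par^^(dist x - i)) x)" using P_nth[OF i] by simp
    also have "\<dots> = (par^^(i - l + (dist x - i))) x" by (simp add: funpow_add)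
    also have "i - l + (dist x - i) = dist x - l" using l i by simp
    also have "(par^^(dist x - l)) x = P x ! l" using P_nth[of l x] l i by simp
    finally show "P ?u ! l = take (Suc i) (P x) ! l" using l by simp
  qed
qed

lemma common: "x \<in> V \<Longrightarrow> y \<in> V \<Longrightarrow> z \<in> set (P x) \<Longrightarrow> z \<in> set (P y) \<Longrightarrow>
  \<exists>k. k < length (lcp (P x) (P y)) \<and> P x ! k = z \<and> P y ! k = z"
proof -
  assume x: "x \<in> V" and y: "y \<in> V" and zx: "z \<in> set (P x)" and zy: "z \<in> set (P y)"
  obtain i where i: "i < length (P x)" "P x ! i = z" using zx by (auto simp: in_set_conv_nth)
  obtain i' where i': "i' < length (P y)" "P y ! i' = z" using zy by (auto simp: in_set_conv_nth)
  have "dist z = i" using P_nth_dist[OF x, of i] i by simp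
  moreover have "dist z = i'" using P_nth_dist[OF y, of i'] i' by simp
  ultimately have ii: "i' = i" by simp
  have "P z = take (Suc i) (P x)" using P_prefix[OF x, of i] i by simp
  moreover have "P z = take (Suc i) (P y)" using P_prefix[OF y, of i'] i' ii by simp
  ultimately have "Suc i \<le> length (lcp (P x) (P y))"
    using i i' ii by (intro lcp_max) auto
  then show ?thesis using i i' ii by (intro exI[of _ i]) simp
qed

lemma lcp_pos: "x \<in> V \<Longrightarrow> y \<in> V \<Longrightarrow> 1 \<le> length (lcp (P x) (P y))"
proof -
  assume x: "x \<in> V" and y: "y \<in> V"
  have "take 1 (P x) = [r]" using P_hd[OF x] P_ne[of x] by (cases "P x") auto
  moreover have "take 1 (P y) = [r]" using P_hd[OF y] P_ne[of y] by (cases "P y") auto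
  ultimately show ?thesis by (intro lcp_max) auto
qed

lemma leaf_anti: "x \<in> V \<Longrightarrow> x \<noteq> r \<Longrightarrow> card {u \<in> V. E x u} = 1 \<Longrightarrow> y \<in> V \<Longrightarrow> P y = P x @ z \<Longrightarrow> z = []"
proof (rule ccontr)
  assume x: "x \<in> V" "x \<noteq> r" "card {u \<in> V. E x u} = 1" and y: "y \<in> V" "P y = P x @ z" and z: "z \<noteq> []"
  let ?d = "dist x"
  have d: "?d > 0" using dist0 x by auto
  have len: "Suc (Suc ?d) < length (P y) \<or> Suc ?d < length (P y)" using y(2) z by simp
  have ly: "Suc ?d < length (P y)" using y(2) z by (cases z) auto
  have "?d - 1 < length (P x)" by simp
  then have a: "P y ! (?d - 1) = P x ! (?d - 1)" using y(2) by (simp add: nth_append)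
  have b: "P y ! ?d = x"
  proof -
    have "last (P x) = P x ! (length (P x) - 1)" using P_ne by (rule last_conv_nth)
    then have "P x ! ?d = x" using P_last[of x] by simp
    then show ?thesis using y(2) by (simp add: nth_append)
  qed
  have py: "is_path V E (P y)" using P_path y(1) by blast
  have "Suc (?d - 1) < length (P y)" using ly by simp
  then have "E (P y ! (?d - 1)) (P y ! Suc (?d - 1))" using py walk_edge unfolding is_path_def by blast
  then have e1: "E x (P y ! (?d - 1))" using b d symE by simp
  have e2: "E x (P y ! Suc ?d)" using py ly b walk_edge unfolding is_path_def by metis
  have ne: "P y ! (?d - 1) \<noteq> P y ! Suc ?d" using py ly unfolding is_path_def
    by (simp add: nth_eq_iff_index_eq)
  have sub: "{P y ! (?d - 1), P y ! Suc ?d} \<subseteq> {u \<in> V. E x u}" using e1 e2 EV by auto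
  have "finite {u \<in> V. E x u}" using finV by simp
  then have "card {P y ! (?d - 1), P y ! Suc ?d} \<le> 1" using card_mono[OF _ sub] x(3) by simp
  then show False using ne by simp
qed

end


definition good :: "nat set \<Rightarrow> (nat \<Rightarrow> nat \<Rightarrow> bool) \<Rightarrow> (nat set \<Rightarrow> int) \<Rightarrow> nat \<Rightarrow> int \<Rightarrow> nat \<Rightarrow> nat \<Rightarrow> nat \<Rightarrow> bool" where
  "good V E lab q a x1 x2 x3 \<longleftrightarrow> (\<exists>v\<in>V. \<exists>p1 p2 p3.
                is_path V E p1 \<and> is_path V E p2 \<and> is_path V E p3 \<and>
                hd p1 = v \<and> hd p2 = v \<and> hd p3 = v \<and>
                last p1 = x1 \<and> last p2 = x2 \<and> last p3 = x3 \<and>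
                set p1 \<inter> set p2 = {v} \<and> set p1 \<inter> set p3 = {v} \<and> set p2 \<inter> set p3 = {v} \<and>
                path_weight lab p1 mod int q = a \<and> path_weight lab p2 mod int q = a \<and>
                path_weight lab p3 mod int q = a)"

lemma good_swap12: "good V E lab q a x1 x2 x3 \<Longrightarrow> good V E lab q a x2 x1 x3"
  unfolding good_def
  apply (elim bexE exE conjE)
  subgoal for v p1 p2 p3
    apply (rule bexI[of _ v], rule exI[of _ p2], rule exI[of _ p1], rule exI[of _ p3])
    by (simp_all add: Int_commute)
  done

lemma good_swap23: "good V E lab q a x1 x2 x3 \<Longrightarrow> good V E lab q a x1 x3 x2"
  unfolding good_def
  apply (elim bexE exE conjE)
  subgoal for v p1 p2 p3
    apply (rule bexI[of _ v], rule exI[of _ p1], rule exI[of _ p3], rule exI[of _ p2])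
    by (simp_all add: Int_commute)
  done

lemma modar: "(u::int) mod q = b \<Longrightarrow> v mod q = b \<Longrightarrow> w mod q = c \<Longrightarrow> (u - v + (w - v)) mod q = (c - b) mod q"
proof -
  assume h: "u mod q = b" "v mod q = b" "w mod q = c"
  have e1: "(u - v) mod q = 0" using h mod_diff_eq[of u q v] by simp
  have e2: "(w - v) mod q = (c - b) mod q" using h mod_diff_eq[of w q v] by simp
  have "(u - v + (w - v)) mod q = ((u - v) mod q + (w - v) mod q) mod q" by (rule mod_add_eq[symmetric])
  then show ?thesis using e1 e2 by simp
qed

lemma anti_lcp: "antichain S \<Longrightarrow> X \<in> S \<Longrightarrow> Y \<in> S \<Longrightarrow> X \<noteq> Y \<Longrightarrow> length (lcp X Y) < length X"
proof (rule ccontr)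
  assume a: "antichain S" "X \<in> S" "Y \<in> S" "X \<noteq> Y" "\<not> length (lcp X Y) < length X"
  then have l: "length (lcp X Y) = length X" using lcp_len1[of X Y] by simp
  then have "lcp X Y = X" using lcp_take1[of X Y] by simp
  then have "take (length X) Y = X" using lcp_take2[of X Y] l by simp
  then have "Y = X @ drop (length X) Y" by (metis append_take_drop_id)
  then have "drop (length X) Y = []" using a(1,2,3) unfolding antichain_def by blast
  then show False using \<open>Y = X @ drop (length X) Y\<close> a(4) by simp
qed

lemma idx_eq: "distinct xs \<Longrightarrow> i < length xs \<Longrightarrow> j < length xs \<Longrightarrow> xs!i = xs!j \<Longrightarrow> i = j"
  by (simp add: nth_eq_iff_index_eq)

context rg
begin

lemma median:
  fixes lab :: "nat set \<Rightarrow> int" and q :: nat and b c :: int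
  assumes L0V: "L0 \<subseteq> V"
   and cc: "\<forall>x\<in>L0. path_weight lab (P x) mod int q = c"
   and bb: "\<forall>x\<in>L0. \<forall>y\<in>L0. x \<noteq> y \<longrightarrow> path_weight lab (lcp (P x) (P y)) mod int q = b \<and> length (lcp (P x) (P y)) < length (P x)"
   and xs: "x1 \<in> L0" "x2 \<in> L0" "x3 \<in> L0" "x1 \<noteq> x2" "x1 \<noteq> x3" "x2 \<noteq> x3"
   and ord: "length (lcp (P x2) (P x3)) \<le> length (lcp (P x1) (P x3))"
            "length (lcp (P x1) (P x3)) \<le> length (lcp (P x1) (P x2))"
  shows "good V E lab q ((c - b) mod int q) x1 x2 x3"
proof -
  have V: "x1 \<in> V" "x2 \<in> V" "x3 \<in> V" using xs L0V by auto
  have bbr: "path_weight lab (lcp (P x) (P y)) mod int q = b \<and> length (lcp (P x) (P y)) < length (P x)"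
    if "x \<in> L0" "y \<in> L0" "x \<noteq> y" for x y
    using bb that by blast
  have x21: "x2 \<noteq> x1" "x3 \<noteq> x1" using xs by auto
  define A1 where "A1 = P x1"
  define A2 where "A2 = P x2"
  define A3 where "A3 = P x3"
  define i where "i = length (lcp A1 A2)"
  define j where "j = length (lcp A1 A3)"
  have j1: "1 \<le> j" unfolding j_def A1_def A3_def using lcp_pos V by simp
  have ji: "j \<le> i" using ord(2) unfolding i_def j_def A1_def A2_def A3_def .
  have j23: "length (lcp A2 A3) \<le> j" using ord(1) unfolding j_def A1_def A2_def A3_def .
  have iA1: "i < length A1" using bbr[OF xs(1) xs(2) xs(4)] unfolding i_def A1_def A2_def by blast
  have iA2: "i \<le> length A2" unfolding i_def by (rule lcp_len2)
  have jA3: "j < length A3"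
  proof -
    have "length (lcp (P x3) (P x1)) < length (P x3)" using bbr[OF xs(3) xs(1) x21(2)] by blast
    then show ?thesis unfolding j_def A1_def A3_def by (simp add: lcp_comm)
  qed
  have T12: "take i A1 = lcp A1 A2" "take i A2 = lcp A1 A2" unfolding i_def by (rule lcp_take1, rule lcp_take2)
  have T13: "take j A1 = lcp A1 A3" "take j A3 = lcp A1 A3" unfolding j_def by (rule lcp_take1, rule lcp_take2)
  have pA1: "is_path V E A1" unfolding A1_def using P_path V by blast
  have pA2: "is_path V E A2" unfolding A2_def using P_path V by blast
  have pA3: "is_path V E A3" unfolding A3_def using P_path V by blast
  have dA1: "distinct A1" and dA2: "distinct A2" and dA3: "distinct A3"
    using pA1 pA2 pA3 unfolding is_path_def by auto
  have eq12: "A1 ! k = A2 ! k" if "k < i" for k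
  proof -
    have "take i A1 ! k = take i A2 ! k" using T12 by simp
    then show ?thesis using that by simp
  qed
  have eq13: "A1 ! k = A3 ! k" if "k < j" for k
  proof -
    have "take j A1 ! k = take j A3 ! k" using T13 by simp
    then show ?thesis using that by simp
  qed
  define m where "m = A1 ! (i - 1)"
  have m2: "A2 ! (i - 1) = m" unfolding m_def using eq12[of "i-1"] j1 ji by simp
  have mV: "m \<in> V" unfolding m_def using pA1 iA1 unfolding is_path_def is_walk_def by auto
  define X where "X = drop (j - 1) (take i A1)"
  define Y where "Y = drop j A3"
  define p1 where "p1 = drop (i - 1) A1"
  define p2 where "p2 = drop (i - 1) A2"
  define p3 where "p3 = rev X @ Y"
  have lti: "length (take i A1) = i" using iA1 by simp
  have Xne: "X \<noteq> []" unfolding X_def using lti j1 ji by simp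
  have Yne: "Y \<noteq> []" unfolding Y_def using jA3 by simp
  have hdX: "hd X = A1 ! (j - 1)" unfolding X_def using lti j1 ji
    by (simp add: hd_drop_conv_nth)
  have lastX: "last X = m" unfolding X_def m_def using lti j1 ji iA1
    by (simp add: last_take')
  have hdY: "hd Y = A3 ! j" unfolding Y_def using jA3 by (simp add: hd_drop_conv_nth)
  have inX: "\<exists>k. j - 1 \<le> k \<and> k < i \<and> A1 ! k = z" if zX: "z \<in> set X" for z
  proof -
    obtain k where "j - 1 \<le> k" "k < length (take i A1)" "take i A1 ! k = z"
      using in_drop[of z "j - 1" "take i A1"] zX unfolding X_def by blast
    then show ?thesis using lti by (intro exI[of _ k]) auto
  qed
  have noY1: "False" if h1: "z \<in> set A1" and h2: "z \<in> set Y" for z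
  proof -
    obtain k3 where k3: "j \<le> k3" "k3 < length A3" "A3 ! k3 = z" using in_drop[of z j A3] h2 unfolding Y_def by blast
    have "z \<in> set A3" using h2 set_drop_subset[of j A3] unfolding Y_def by blast
    then obtain k where k: "k < j" "P x3 ! k = z"
      using common[OF V(1) V(3), of z] h1 unfolding A1_def A3_def j_def by blast
    have "k < length A3" using k(1) jA3 by linarith
    then have "k = k3" using idx_eq[OF dA3, of k k3] k(2) k3(2,3) unfolding A3_def by simp
    then show False using k k3 by simp
  qed
  have noY2: "False" if h1: "z \<in> set A2" and h2: "z \<in> set Y" for z
  proof -
    obtain k3 where k3: "j \<le> k3" "k3 < length A3" "A3 ! k3 = z" using in_drop[of z j A3] h2 unfolding Y_def by blast
    have "z \<in> set A3" using h2 set_drop_subset[of j A3] unfolding Y_def by blast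
    then obtain k where k: "k < length (lcp A2 A3)" "P x3 ! k = z"
      using common[OF V(2) V(3), of z] h1 unfolding A2_def A3_def by blast
    then have "k < j" using j23 by simp
    have "k < length A3" using \<open>k < j\<close> jA3 by linarith
    then have "k = k3" using idx_eq[OF dA3, of k k3] k(2) k3(2,3) unfolding A3_def by simp
    then show False using k k3 \<open>k < j\<close> by simp
  qed
  have XA1: "set X \<subseteq> set A1" unfolding X_def using set_drop_subset set_take_subset by fastforce
  have P1: "is_path V E p1" unfolding p1_def using path_drop[OF pA1] iA1 by simp
  have P2: "is_path V E p2" unfolding p2_def using path_drop[OF pA2] iA2 j1 ji by simp
  have "0 < i" using j1 ji by simp
  then have pT: "is_path V E (take i A1)" using path_take[OF pA1] by blast
  have "j - 1 < length (take i A1)" using lti j1 ji by simp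
  then have pX: "is_path V E X" unfolding X_def using path_drop[OF pT] by blast
  have pY: "is_path V E Y" unfolding Y_def using path_drop[OF pA3 jA3] .
  have edge: "E (last (rev X)) (hd Y)"
  proof -
    have "E (A3 ! (j - 1)) (A3 ! Suc (j - 1))" using walk_edge[of V E A3 "j - 1"] pA3 jA3 j1
      unfolding is_path_def by simp
    then show ?thesis using hdX hdY eq13[of "j - 1"] j1 by (simp add: last_rev)
  qed
  have disj: "set (rev X) \<inter> set Y = {}" using noY1 XA1 by auto
  have P3: "is_path V E p3" unfolding p3_def
    by (rule path_append[OF path_rev[OF symE pX] pY edge disj])
  have H1: "hd p1 = m" unfolding p1_def m_def using iA1 by (simp add: hd_drop_conv_nth)
  have H2: "hd p2 = m" unfolding p2_def using m2 iA2 j1 ji by (simp add: hd_drop_conv_nth)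
  have H3: "hd p3 = m" unfolding p3_def using Xne lastX by (simp add: hd_rev)
  have L1: "last p1 = x1" unfolding p1_def A1_def using iA1 P_last unfolding A1_def by simp
  have L2: "last p2 = x2" unfolding p2_def using iA2 j1 ji P_last unfolding A2_def by simp
  have L3: "last p3 = x3" unfolding p3_def Y_def using jA3 Yne P_last unfolding Y_def A3_def by simp
  have m_p1: "m \<in> set p1" unfolding p1_def m_def using in_drop2[of "i-1" "i-1" A1] iA1 by simp
  have m_p2: "m \<in> set p2" unfolding p2_def using in_drop2[of "i-1" "i-1" A2] iA2 j1 ji m2 by simp
  have m_p3: "m \<in> set p3" unfolding p3_def using lastX Xne last_in_set[of X] by simp
  have inp1: "\<exists>k. i - 1 \<le> k \<and> k < length A1 \<and> A1 ! k = z" if "z \<in> set p1" for z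
    using in_drop[of z "i - 1" A1] that unfolding p1_def by blast
  have inp2: "\<exists>k. i - 1 \<le> k \<and> k < length A2 \<and> A2 ! k = z" if "z \<in> set p2" for z
    using in_drop[of z "i - 1" A2] that unfolding p2_def by blast
  have p1A1: "set p1 \<subseteq> set A1" unfolding p1_def by (rule set_drop_subset)
  have p2A2: "set p2 \<subseteq> set A2" unfolding p2_def by (rule set_drop_subset)
  have S12: "set p1 \<inter> set p2 = {m}"
  proof
    show "set p1 \<inter> set p2 \<subseteq> {m}"
    proof
      fix z assume z: "z \<in> set p1 \<inter> set p2"
      obtain k1 where k1: "i - 1 \<le> k1" "k1 < length A1" "A1 ! k1 = z" using inp1 z by blast
      have "z \<in> set A1" "z \<in> set A2" using z p1A1 p2A2 by auto
      then obtain k where k: "k < i" "P x1 ! k = z"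
        using common[OF V(1) V(2), of z] unfolding A1_def A2_def i_def by blast
      have "k < length A1" using k(1) iA1 by linarith
      then have "k = k1" using idx_eq[OF dA1, of k k1] k(2) k1(2,3) unfolding A1_def by simp
      then have "k1 = i - 1" using k k1 by simp
      then show "z \<in> {m}" using k1 unfolding m_def by simp
    qed
  qed (use m_p1 m_p2 in simp)
  have S13: "set p1 \<inter> set p3 = {m}"
  proof
    show "set p1 \<inter> set p3 \<subseteq> {m}"
    proof
      fix z assume z: "z \<in> set p1 \<inter> set p3"
      obtain k1 where k1: "i - 1 \<le> k1" "k1 < length A1" "A1 ! k1 = z" using inp1 z by blast
      have zA1: "z \<in> set A1" using z p1A1 by auto
      have "z \<in> set X \<or> z \<in> set Y" using z unfolding p3_def by auto
      then show "z \<in> {m}"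
      proof
        assume "z \<in> set X"
        then obtain k where k: "j - 1 \<le> k" "k < i" "A1 ! k = z" using inX by blast
        have "k < length A1" using k(2) iA1 by linarith
        then have "k = k1" using idx_eq[OF dA1, of k k1] k(3) k1(2,3) by simp
        then have "k1 = i - 1" using k k1 by simp
        then show "z \<in> {m}" using k1 unfolding m_def by simp
      next
        assume "z \<in> set Y"
        then show "z \<in> {m}" using noY1 zA1 by blast
      qed
    qed
  qed (use m_p1 m_p3 in simp)
  have S23: "set p2 \<inter> set p3 = {m}"
  proof
    show "set p2 \<inter> set p3 \<subseteq> {m}"
    proof
      fix z assume z: "z \<in> set p2 \<inter> set p3"
      obtain k2 where k2: "i - 1 \<le> k2" "k2 < length A2" "A2 ! k2 = z" using inp2 z by blast
      have zA2: "z \<in> set A2" using z p2A2 by auto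
      have "z \<in> set X \<or> z \<in> set Y" using z unfolding p3_def by auto
      then show "z \<in> {m}"
      proof
        assume "z \<in> set X"
        then obtain k where k: "j - 1 \<le> k" "k < i" "A1 ! k = z" using inX by blast
        then have "A2 ! k = z" using eq12 by simp
        have "k < length A2" using k(2) iA2 by linarith
        then have "k = k2" using idx_eq[OF dA2, of k k2] \<open>A2 ! k = z\<close> k2(2,3) by simp
        then have "k2 = i - 1" using k k2 by simp
        then show "z \<in> {m}" using k2 m2 by simp
      next
        assume "z \<in> set Y"
        then show "z \<in> {m}" using noY2 zA2 by blast
      qed
    qed
  qed (use m_p2 m_p3 in simp)
  let ?W = "path_weight lab"
  have cA1: "?W A1 mod int q = c" and cA2: "?W A2 mod int q = c" and cA3: "?W A3 mod int q = c"
    using cc xs(1-3) unfolding A1_def A2_def A3_def by blast+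
  have b12: "?W (lcp A1 A2) mod int q = b" using bbr[OF xs(1) xs(2) xs(4)] unfolding A1_def A2_def by blast
  have b13: "?W (lcp A1 A3) mod int q = b" using bbr[OF xs(1) xs(3) xs(5)] unfolding A1_def A3_def by blast
  have "?W A1 = ?W (take i A1) + ?W p1" unfolding p1_def using W_split[of i A1 lab] iA1 j1 ji by simp
  then have w1: "?W p1 = ?W A1 - ?W (lcp A1 A2)" using T12 by simp
  have W1: "?W p1 mod int q = (c - b) mod int q" unfolding w1 using cA1 b12 mod_diff_eq[of "?W A1" "int q" "?W (lcp A1 A2)"] by simp
  have "?W A2 = ?W (take i A2) + ?W p2" unfolding p2_def using W_split[of i A2 lab] iA2 j1 ji by simp
  then have w2: "?W p2 = ?W A2 - ?W (lcp A1 A2)" using T12 by simp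
  have W2: "?W p2 mod int q = (c - b) mod int q" unfolding w2 using cA2 b12 mod_diff_eq[of "?W A2" "int q" "?W (lcp A1 A2)"] by simp
  have "?W p3 = ?W (rev X) + lab {last (rev X), hd Y} + ?W Y" unfolding p3_def
    using W_append[of "rev X" Y lab] Xne Yne by simp
  also have "\<dots> = ?W X + lab {A3 ! (j - 1), A3 ! j} + ?W Y"
    using hdX hdY eq13[of "j - 1"] j1 by (simp add: W_rev last_rev)
  finally have w3a: "?W p3 = ?W X + lab {A3 ! (j - 1), A3 ! j} + ?W Y" .
  have "drop (j - 1) A3 = [A3 ! (j - 1)] @ Y" unfolding Y_def using drop_pred[of j A3] j1 jA3 by simp
  then have w3b: "?W (drop (j - 1) A3) = lab {A3 ! (j - 1), A3 ! j} + ?W Y"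
    using W_append[of "[A3 ! (j - 1)]" Y lab] Yne hdY by simp
  have w3c: "?W A3 = ?W (lcp A1 A3) + ?W (drop (j - 1) A3)"
    using W_split[of j A3 lab] j1 jA3 T13 by simp
  have "?W (take i A1) = ?W (take j (take i A1)) + ?W X"
    unfolding X_def using W_split[of j "take i A1" lab] j1 ji lti by simp
  moreover have "take j (take i A1) = lcp A1 A3" using ji T13 by (simp add: min_def)
  ultimately have w3d: "?W X = ?W (lcp A1 A2) - ?W (lcp A1 A3)" using T12 by simp
  have w3: "?W p3 = ?W (lcp A1 A2) - ?W (lcp A1 A3) + (?W A3 - ?W (lcp A1 A3))"
    using w3a w3b w3c w3d by simp
  have W3: "?W p3 mod int q = (c - b) mod int q" unfolding w3 by (rule modar[OF b12 b13 cA3])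
  show ?thesis unfolding good_def
    by (intro bexI[of _ m] exI[of _ p1] exI[of _ p2] exI[of _ p3] conjI P1 P2 P3 H1 H2 H3 L1 L2 L3 S12 S13 S23 W1 W2 W3 mV)
qed

end


context rg
begin

lemma good_all:
  fixes lab :: "nat set \<Rightarrow> int" and q :: nat and b c :: int
  assumes L0V: "L0 \<subseteq> V"
   and cc: "\<forall>x\<in>L0. path_weight lab (P x) mod int q = c"
   and bb: "\<forall>x\<in>L0. \<forall>y\<in>L0. x \<noteq> y \<longrightarrow> path_weight lab (lcp (P x) (P y)) mod int q = b \<and> length (lcp (P x) (P y)) < length (P x)"
   and xs: "x1 \<in> L0" "x2 \<in> L0" "x3 \<in> L0" "x1 \<noteq> x2" "x1 \<noteq> x3" "x2 \<noteq> x3"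
  shows "good V E lab q ((c - b) mod int q) x1 x2 x3"
proof -
  note M = median[OF L0V cc bb]
  have xs': "x2 \<noteq> x1" "x3 \<noteq> x1" "x3 \<noteq> x2" using xs by auto
  have s12: "length (lcp (P x2) (P x1)) = length (lcp (P x1) (P x2))" by (simp add: lcp_comm)
  have s13: "length (lcp (P x3) (P x1)) = length (lcp (P x1) (P x3))" by (simp add: lcp_comm)
  have s23: "length (lcp (P x3) (P x2)) = length (lcp (P x2) (P x3))" by (simp add: lcp_comm)
  consider
    "length (lcp (P x2) (P x3)) \<le> length (lcp (P x1) (P x3)) \<and> length (lcp (P x1) (P x3)) \<le> length (lcp (P x1) (P x2))"
  | "length (lcp (P x1) (P x3)) \<le> length (lcp (P x2) (P x3)) \<and> length (lcp (P x2) (P x3)) \<le> length (lcp (P x1) (P x2))"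
  | "length (lcp (P x2) (P x3)) \<le> length (lcp (P x1) (P x2)) \<and> length (lcp (P x1) (P x2)) \<le> length (lcp (P x1) (P x3))"
  | "length (lcp (P x1) (P x2)) \<le> length (lcp (P x2) (P x3)) \<and> length (lcp (P x2) (P x3)) \<le> length (lcp (P x1) (P x3))"
  | "length (lcp (P x1) (P x3)) \<le> length (lcp (P x1) (P x2)) \<and> length (lcp (P x1) (P x2)) \<le> length (lcp (P x2) (P x3))"
  | "length (lcp (P x1) (P x2)) \<le> length (lcp (P x1) (P x3)) \<and> length (lcp (P x1) (P x3)) \<le> length (lcp (P x2) (P x3))"
    by linarith
  then show ?thesis
  proof cases
    case 1
    then show ?thesis using M[OF xs] by blast
  next
    case 2
    then have "good V E lab q ((c - b) mod int q) x2 x1 x3"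
      using M[OF xs(2) xs(1) xs(3) xs'(1) xs(6) xs(5)] s12 s13 by simp
    then show ?thesis by (rule good_swap12)
  next
    case 3
    then have "good V E lab q ((c - b) mod int q) x1 x3 x2"
      using M[OF xs(1) xs(3) xs(2) xs(5) xs(4) xs'(3)] s23 by simp
    then show ?thesis by (rule good_swap23)
  next
    case 4
    then have "good V E lab q ((c - b) mod int q) x3 x1 x2"
      using M[OF xs(3) xs(1) xs(2) xs'(2) xs'(3) xs(4)] s13 s23 by simp
    then show ?thesis by (rule good_swap23[OF good_swap12])
  next
    case 5
    then have "good V E lab q ((c - b) mod int q) x2 x3 x1"
      using M[OF xs(2) xs(3) xs(1) xs(6) xs'(1) xs'(2)] s12 s13 by simp
    then show ?thesis by (rule good_swap12[OF good_swap23])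
  next
    case 6
    then have "good V E lab q ((c - b) mod int q) x3 x2 x1"
      using M[OF xs(3) xs(2) xs(1) xs'(3) xs'(2) xs'(1)] s12 s13 s23 by simp
    then show ?thesis by (rule good_swap12[OF good_swap23[OF good_swap12]])
  qed
qed

end

theorem lemma3:
  shows "\<exists>f1 :: nat \<Rightarrow> nat \<Rightarrow> nat. \<forall>k q. k \<ge> 2 \<longrightarrow> q \<ge> 2 \<longrightarrow>
    (\<forall>V E (lab :: nat set \<Rightarrow> int) L.
       is_tree V E \<longrightarrow>
       (\<forall>u w. E u w \<longrightarrow> lab {u, w} \<in> {0..<int q}) \<longrightarrow>
       (\<forall>x\<in>L. is_leaf V E x) \<longrightarrow>
       card L = f1 k q \<longrightarrow>
       (\<exists>L0 a. L0 \<subseteq> L \<and> card L0 = k \<and> a \<in> {0..<int q} \<and>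
          (\<forall>x1\<in>L0. \<forall>x2\<in>L0. \<forall>x3\<in>L0. x1 \<noteq> x2 \<and> x1 \<noteq> x3 \<and> x2 \<noteq> x3 \<longrightarrow>
             (\<exists>v\<in>V. \<exists>p1 p2 p3.
                is_path V E p1 \<and> is_path V E p2 \<and> is_path V E p3 \<and>
                hd p1 = v \<and> hd p2 = v \<and> hd p3 = v \<and>
                last p1 = x1 \<and> last p2 = x2 \<and> last p3 = x3 \<and>
                set p1 \<inter> set p2 = {v} \<and> set p1 \<inter> set p3 = {v} \<and> set p2 \<inter> set p3 = {v} \<and>
                path_weight lab p1 mod int q = a \<and> path_weight lab p2 mod int q = a \<and>
                path_weight lab p3 mod int q = a))))"
proof (intro exI[of _ "\<lambda>k q. q * k^(q*(k-1)+1) + 1"] allI impI)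
  fix k q :: nat and V E and lab :: "nat set \<Rightarrow> int" and L
  assume k: "k \<ge> 2" and q: "q \<ge> 2" and tree: "is_tree V E"
    and labr: "\<forall>u w. E u w \<longrightarrow> lab {u, w} \<in> {0..<int q}"
    and leaves: "\<forall>x\<in>L. is_leaf V E x"
    and cardL: "card L = q * k^(q*(k-1)+1) + 1"
  define M where "M = q*(k-1)+1"
  have sg: "simple_graph V E" and conn: "connected_graph V E" using tree unfolding is_tree_def by auto
  obtain r where rV: "r \<in> V" using conn unfolding connected_graph_def by blast
  interpret rg V E r using sg conn rV by unfold_locales
  have LV: "L \<subseteq> V" using leaves unfolding is_leaf_def by blast
  have finL: "finite L" using finite_subset[OF LV finV] .
  define L' where "L' = L - {r}"
  have cL': "card L' \<ge> q * k^M"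
    unfolding L'_def M_def using cardL finL by (simp add: card_Diff_singleton_if)
  have finL': "finite L'" unfolding L'_def using finL by simp
  define col0 where "col0 x = nat (path_weight lab (P x) mod int q)" for x
  have q0: "int q > 0" using q by simp
  have col0q: "\<forall>x\<in>L'. col0 x < q"
  proof
    fix x
    have "path_weight lab (P x) mod int q < int q" using q0 by simp
    moreover have "0 \<le> path_weight lab (P x) mod int q" using q0 by simp
    ultimately show "col0 x < q" unfolding col0_def by linarith
  qed
  obtain c0 where c0: "c0 < q" "card {x\<in>L'. col0 x = c0} \<ge> k^M"
    using pigeon[OF finL' col0q cL'] q by auto
  define L1 where "L1 = {x\<in>L'. col0 x = c0}"
  have L1L: "L1 \<subseteq> L" unfolding L1_def L'_def by auto
  have rL1: "r \<notin> L1" unfolding L1_def L'_def by auto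
  have finL1: "finite L1" unfolding L1_def using finL' by simp
  have cL1: "card L1 \<ge> k^M" using c0(2) unfolding L1_def .
  have L1V: "L1 \<subseteq> V" using L1L LV by auto
  have injP: "inj_on P L1"
  proof (rule inj_onI)
    fix x y assume "P x = P y"
    then have "last (P x) = last (P y)" by simp
    then show "x = y" by (simp add: P_last)
  qed
  define S where "S = P ` L1"
  have finS: "finite S" unfolding S_def using finL1 by simp
  have cS: "card S = card L1" unfolding S_def using card_image[OF injP] .
  have anti: "antichain S"
    unfolding antichain_def
  proof (intro ballI allI impI)
    fix X Y z assume "X \<in> S" "Y \<in> S" "Y = X @ z"
    then obtain x y where xy: "x \<in> L1" "y \<in> L1" "X = P x" "Y = P y" unfolding S_def by blast
    have "x \<in> V" "y \<in> V" "x \<noteq> r" using xy L1V rL1 by auto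
    moreover have "card {u \<in> V. E x u} = 1" using leaves L1L xy(1) unfolding is_leaf_def by blast
    moreover have "P y = P x @ z" using xy \<open>Y = X @ z\<close> by simp
    ultimately show "z = []" using leaf_anti by blast
  qed
  define col where "col l = nat (path_weight lab l mod int q)" for l
  have colq: "\<forall>l. col l < q"
  proof
    fix l
    have "path_weight lab l mod int q < int q" using q0 by simp
    moreover have "0 \<le> path_weight lab l mod int q" using q0 by simp
    ultimately show "col l < q" unfolding col_def by linarith
  qed
  have kq: "k \<ge> 2" "q > 0" using k q by auto
  obtain S0 b0 where S0: "S0 \<subseteq> S" "card S0 = k" "\<forall>x\<in>S0. \<forall>y\<in>S0. x \<noteq> y \<longrightarrow> col (lcp x y) = b0"
    using ramsey_lcp[OF kq finS anti colq] cS cL1 unfolding M_def by auto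
  obtain L0 where L0: "L0 \<subseteq> L1" "S0 = P ` L0" using S0(1) unfolding S_def by (auto simp: subset_image_iff)
  have cL0: "card L0 = k" using S0(2) L0 card_image[OF inj_on_subset[OF injP L0(1)]] by simp
  define a where "a = (int c0 - int b0) mod int q"
  have aq: "a \<in> {0..<int q}" unfolding a_def using q0 by simp
  have L0V: "L0 \<subseteq> V" using L0(1) L1V by auto
  have cc: "\<forall>x\<in>L0. path_weight lab (P x) mod int q = int c0"
  proof
    fix x assume "x \<in> L0"
    then have "col0 x = c0" using L0(1) unfolding L1_def by auto
    moreover have "0 \<le> path_weight lab (P x) mod int q" using q0 by simp
    ultimately show "path_weight lab (P x) mod int q = int c0" unfolding col0_def by auto
  qed
  have bb: "\<forall>x\<in>L0. \<forall>y\<in>L0. x \<noteq> y \<longrightarrow> path_weight lab (lcp (P x) (P y)) mod int q = int b0 \<and> length (lcp (P x) (P y)) < length (P x)"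
  proof (intro ballI impI)
    fix x y assume xy: "x \<in> L0" "y \<in> L0" "x \<noteq> y"
    have ne: "P x \<noteq> P y" using injP xy L0(1) unfolding inj_on_def by blast
    have inS0: "P x \<in> S0" "P y \<in> S0" using xy L0(2) by auto
    then have "col (lcp (P x) (P y)) = b0" using S0(3) ne by blast
    moreover have "0 \<le> path_weight lab (lcp (P x) (P y)) mod int q" using q0 by simp
    ultimately have 1: "path_weight lab (lcp (P x) (P y)) mod int q = int b0" unfolding col_def by auto
    have "P x \<in> S" "P y \<in> S" using inS0 S0(1) by auto
    then have "length (lcp (P x) (P y)) < length (P x)" using anti_lcp[OF anti _ _ ne] by blast
    then show "path_weight lab (lcp (P x) (P y)) mod int q = int b0 \<and> length (lcp (P x) (P y)) < length (P x)"
      using 1 by simp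
  qed
  have G: "good V E lab q a x1 x2 x3" if "x1 \<in> L0" "x2 \<in> L0" "x3 \<in> L0" "x1 \<noteq> x2" "x1 \<noteq> x3" "x2 \<noteq> x3" for x1 x2 x3
    unfolding a_def by (rule good_all[OF L0V cc bb that])
  show "\<exists>L0 a. L0 \<subseteq> L \<and> card L0 = k \<and> a \<in> {0..<int q} \<and>
          (\<forall>x1\<in>L0. \<forall>x2\<in>L0. \<forall>x3\<in>L0. x1 \<noteq> x2 \<and> x1 \<noteq> x3 \<and> x2 \<noteq> x3 \<longrightarrow>
             (\<exists>v\<in>V. \<exists>p1 p2 p3.
                is_path V E p1 \<and> is_path V E p2 \<and> is_path V E p3 \<and>
                hd p1 = v \<and> hd p2 = v \<and> hd p3 = v \<and>
                last p1 = x1 \<and> last p2 = x2 \<and> last p3 = x3 \<and>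
                set p1 \<inter> set p2 = {v} \<and> set p1 \<inter> set p3 = {v} \<and> set p2 \<inter> set p3 = {v} \<and>
                path_weight lab p1 mod int q = a \<and> path_weight lab p2 mod int q = a \<and>
                path_weight lab p3 mod int q = a))"
  proof (intro exI[of _ L0] exI[of _ a] conjI ballI impI)
    show "L0 \<subseteq> L" using L0(1) L1L by auto
    show "card L0 = k" by (rule cL0)
    show "a \<in> {0..<int q}" by (rule aq)
  next
    fix x1 x2 x3 assume "x1 \<in> L0" "x2 \<in> L0" "x3 \<in> L0" "x1 \<noteq> x2 \<and> x1 \<noteq> x3 \<and> x2 \<noteq> x3"
    then have "good V E lab q a x1 x2 x3" using G by blast
    then show "\<exists>v\<in>V. \<exists>p1 p2 p3.
                is_path V E p1 \<and> is_path V E p2 \<and> is_path V E p3 \<and>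
                hd p1 = v \<and> hd p2 = v \<and> hd p3 = v \<and>
                last p1 = x1 \<and> last p2 = x2 \<and> last p3 = x3 \<and>
                set p1 \<inter> set p2 = {v} \<and> set p1 \<inter> set p3 = {v} \<and> set p2 \<inter> set p3 = {v} \<and>
                path_weight lab p1 mod int q = a \<and> path_weight lab p2 mod int q = a \<and>
                path_weight lab p3 mod int q = a" unfolding good_def .
  qed
qed


end
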